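(* Let $t<k\le n$ and $\lambda$ be positive integers. If there exist a Steiner system S$(t,k,n)$ and a perpendicular array PA$_\lambda(k,n,n)$, then there exists a large set with multiplicity LS$(t,k,n;\mu)$, where $\mu=\lambda\binom{n}{t}\big/\binom{k}{t}$.
   Context: A Steiner system S$(t,k,n)$ is a pair $(Q,B)$ where $Q$ is an $n$-set and $B$ is a collection of $k$-subsets (blocks) of $Q$ such that every $t$-subset of $Q$ is contained in exactly one block. A large set with multiplicity $\mu$, LS$(t,k,n;\mu)$, is a family (the same system may occur more than once) of Steiner systems S$(t,k,n)$ on a common $n$-set $Q$ such that every $k$-subset of $Q$ is a block of exactly $\mu$ of the systems. A perpendicular array PA$_\lambda(k,\ell,n)$ is a $\lambda\binom{n}{k}\times \ell$ matrix with entries from an $n$-set such that each row has $\ell$ distinct entries and, in the submatrix formed by any $k$ columns, each $k$-subset of the $n$-set occurs (as the set of entries of a row) exactly $\lambda$ times; for $\ell=n$ its rows are permutations of the $n$-set. *)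

theory Defs
  imports Main "HOL-Library.Multiset"
begin

definition steiner_system :: "nat \<Rightarrow> nat \<Rightarrow> 'a set \<Rightarrow> 'a set set \<Rightarrow> bool" where
  "steiner_system t k Q B \<longleftrightarrow>
     finite Q \<and>
     (\<forall>K\<in>B. K \<subseteq> Q \<and> card K = k) \<and>
     (\<forall>T. T \<subseteq> Q \<and> card T = t \<longrightarrow> (\<exists>!K. K \<in> B \<and> T \<subseteq> K))"

definition large_set :: "nat \<Rightarrow> nat \<Rightarrow> nat \<Rightarrow> 'a set \<Rightarrow> 'a set set multiset \<Rightarrow> bool" where
  "large_set t k mu Q F \<longleftrightarrow>
     finite Q \<and>
     (\<forall>B\<in>#F. steiner_system t k Q B) \<and>
     (\<forall>K. K \<subseteq> Q \<and> card K = k \<longrightarrow> size (filter_mset (\<lambda>B. K \<in> B) F) = mu)"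

definition perpendicular_array :: "nat \<Rightarrow> nat \<Rightarrow> nat \<Rightarrow> 'a set \<Rightarrow> 'a list list \<Rightarrow> bool" where
  "perpendicular_array lam k l X M \<longleftrightarrow>
     finite X \<and>
     length M = lam * (card X choose k) \<and>
     (\<forall>r\<in>set M. length r = l \<and> distinct r \<and> set r \<subseteq> X) \<and>
     (\<forall>C K. C \<subseteq> {..<l} \<and> card C = k \<and> K \<subseteq> X \<and> card K = k \<longrightarrow>
        length (filter (\<lambda>r. (\<lambda>i. r ! i) ` C = K) M) = lam)"

end

theory Submission
  imports Defs
begin

lemma steiner_image:
  assumes bij: "bij_betw f Q X" and st: "steiner_system t k Q B"
  shows "steiner_system t k X ((`) f ` B)"
proof -
  have finQ: "finite Q" and blk: "\<forall>K\<in>B. K \<subseteq> Q \<and> card K = k"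
    and un: "\<forall>T. T \<subseteq> Q \<and> card T = t \<longrightarrow> (\<exists>!K. K \<in> B \<and> T \<subseteq> K)"
    using st unfolding steiner_system_def by auto
  have inj: "inj_on f Q" and img: "f ` Q = X" using bij by (auto simp: bij_betw_def)
  have finX: "finite X" using finQ img by auto
  have b2: "\<forall>K\<in>(`) f ` B. K \<subseteq> X \<and> card K = k"
  proof
    fix K assume "K \<in> (`) f ` B"
    then obtain b where b: "b \<in> B" "K = f ` b" by auto
    then have "b \<subseteq> Q" "card b = k" using blk by auto
    then show "K \<subseteq> X \<and> card K = k" using b img inj
      by (metis card_image image_mono inj_on_subset)
  qed
  have b3: "\<forall>T. T \<subseteq> X \<and> card T = t \<longrightarrow> (\<exists>!K. K \<in> (`) f ` B \<and> T \<subseteq> K)"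
  proof (intro allI impI)
    fix T assume T: "T \<subseteq> X \<and> card T = t"
    define T' where "T' = Q \<inter> f -` T"
    have fT': "f ` T' = T" using T img unfolding T'_def by auto
    have T'Q: "T' \<subseteq> Q" unfolding T'_def by auto
    have cT': "card T' = t" using fT' T T'Q inj by (metis card_image inj_on_subset)
    have ex: "\<exists>!K. K \<in> B \<and> T' \<subseteq> K" by (rule un[rule_format]) (simp add: T'Q cT')
    from ex obtain b where b: "b \<in> B \<and> T' \<subseteq> b" and bu: "\<forall>y. y \<in> B \<and> T' \<subseteq> y \<longrightarrow> y = b"
      by (rule ex1E)
    show "\<exists>!K. K \<in> (`) f ` B \<and> T \<subseteq> K"
    proof (rule ex1I[of _ "f ` b"])
      show "f ` b \<in> (`) f ` B \<and> T \<subseteq> f ` b" using b fT' by auto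
    next
      fix K assume K: "K \<in> (`) f ` B \<and> T \<subseteq> K"
      then obtain b2 where b2: "b2 \<in> B" "K = f ` b2" by auto
      have "b2 \<subseteq> Q" using b2 blk by auto
      have "T' \<subseteq> b2"
      proof
        fix x assume x: "x \<in> T'"
        then have "f x \<in> f ` b2" using fT' K b2 by auto
        then obtain y where "y \<in> b2" "f x = f y" by auto
        then show "x \<in> b2" using x T'Q \<open>b2 \<subseteq> Q\<close> inj by (metis inj_onD subsetD)
      qed
      then have "b2 = b" using bu b2 by blast
      then show "K = f ` b" using b2 by simp
    qed
  qed
  show ?thesis unfolding steiner_system_def by (intro conjI finX b2 b3)
qed

lemma steiner_card:
  assumes st: "steiner_system t k Q B"
  shows "card B * (k choose t) = card Q choose t"
proof -
  have finQ: "finite Q" and blk: "\<forall>K\<in>B. K \<subseteq> Q \<and> card K = k"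
    and un: "\<forall>T. T \<subseteq> Q \<and> card T = t \<longrightarrow> (\<exists>!K. K \<in> B \<and> T \<subseteq> K)"
    using st unfolding steiner_system_def by auto
  have finB: "finite B" using blk finQ by (meson PowI finite_Pow_iff finite_subset subsetI)
  define S where "S = {T. T \<subseteq> Q \<and> card T = t}"
  have finS: "finite S" unfolding S_def using finQ by auto
  have cS: "card S = card Q choose t" unfolding S_def using finQ n_subsets by blast
  have "card B * (k choose t) = (\<Sum>b\<in>B. k choose t)" by simp
  also have "\<dots> = (\<Sum>b\<in>B. \<Sum>T\<in>S. if T \<subseteq> b then 1 else 0)"
  proof (rule sum.cong[OF refl])
    fix b assume b: "b \<in> B"
    have "{T. T \<subseteq> b \<and> card T = t} = {T\<in>S. T \<subseteq> b}" using b blk unfolding S_def by auto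
    moreover have "card {T. T \<subseteq> b \<and> card T = t} = k choose t"
      using b blk finQ n_subsets by (metis finite_subset)
    moreover have "S \<inter> {T. T \<subseteq> b} = {T\<in>S. T \<subseteq> b}" by auto
    ultimately show "k choose t = (\<Sum>T\<in>S. if T \<subseteq> b then 1 else 0)"
      using finS by (simp add: sum.If_cases)
  qed
  also have "\<dots> = (\<Sum>T\<in>S. \<Sum>b\<in>B. if T \<subseteq> b then 1 else 0)" by (rule sum.swap)
  also have "\<dots> = (\<Sum>T\<in>S. 1)"
  proof (rule sum.cong[OF refl])
    fix T assume "T \<in> S"
    then have "T \<subseteq> Q \<and> card T = t" unfolding S_def by simp
    then have "\<exists>!K. K \<in> B \<and> T \<subseteq> K" by (rule un[rule_format])
    then obtain b where b: "b \<in> B \<and> T \<subseteq> b" and bu: "\<forall>y. y \<in> B \<and> T \<subseteq> y \<longrightarrow> y = b"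
      by (rule ex1E)
    have "B \<inter> {b'. T \<subseteq> b'} = {b}" using b bu by blast
    then show "(\<Sum>b\<in>B. if T \<subseteq> b then 1 else 0) = (1::nat)"
      using finB by (simp add: sum.If_cases)
  qed
  also have "\<dots> = card S" by simp
  finally show ?thesis using cS by simp
qed

lemma length_filter_sum:
  assumes "finite B"
    and "\<forall>x\<in>set xs. P x \<longleftrightarrow> (\<exists>b\<in>B. R b x)"
    and "\<forall>x\<in>set xs. \<forall>b1\<in>B. \<forall>b2\<in>B. R b1 x \<and> R b2 x \<longrightarrow> b1 = b2"
  shows "length (filter P xs) = (\<Sum>b\<in>B. length (filter (R b) xs))"
  using assms(2,3)
proof (induction xs)
  case Nil
  then show ?case by simp
next
  case (Cons x xs)
  have "(\<Sum>b\<in>B. length (filter (R b) (x # xs))) =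
        (\<Sum>b\<in>B. (if R b x then 1 else 0)) + (\<Sum>b\<in>B. length (filter (R b) xs))"
    by (subst sum.distrib[symmetric]) (auto intro!: sum.cong)
  moreover have "(\<Sum>b\<in>B. (if R b x then 1 else 0)) = (if P x then 1 else (0::nat))"
  proof (cases "P x")
    case True
    then obtain b where b: "b \<in> B" "R b x" using Cons.prems(1) by auto
    have "\<forall>b1\<in>B. \<forall>b2\<in>B. R b1 x \<and> R b2 x \<longrightarrow> b1 = b2" using Cons.prems(2) by simp
    then have "B \<inter> {b'. R b' x} = {b}" using b by blast
    then show ?thesis using True assms(1) by (simp add: sum.If_cases)
  next
    case False
    then have "B \<inter> {b'. R b' x} = {}" using Cons.prems(1) by auto
    then show ?thesis using False assms(1) by (simp add: sum.If_cases)
  qed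
  moreover have p1: "\<forall>x\<in>set xs. P x \<longleftrightarrow> (\<exists>b\<in>B. R b x)" using Cons.prems(1) by simp
  moreover have p2: "\<forall>x\<in>set xs. \<forall>b1\<in>B. \<forall>b2\<in>B. R b1 x \<and> R b2 x \<longrightarrow> b1 = b2"
    using Cons.prems(2) by (simp only: list.set ball_simps) (rule conjunct2)
  moreover have "length (filter P xs) = (\<Sum>b\<in>B. length (filter (R b) xs))"
    by (rule Cons.IH[OF p1 p2])
  ultimately show ?case by simp
qed

theorem theorem8:
  fixes t k n lam :: nat
  assumes "0 < t" and "t < k" and "k \<le> n" and "0 < lam"
    and "\<exists>(Q::nat set) B. card Q = n \<and> steiner_system t k Q B"
    and "\<exists>(X::nat set) M. card X = n \<and> perpendicular_array lam k n X M"
  shows "\<exists>(Q::nat set) F. card Q = n \<and>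
           large_set t k (lam * (n choose t) div (k choose t)) Q F"
proof -
  obtain Q :: "nat set" and B where Q: "card Q = n" and st: "steiner_system t k Q B"
    using assms(5) by blast
  obtain X :: "nat set" and M where X: "card X = n" and pa: "perpendicular_array lam k n X M"
    using assms(6) by blast
  have finQ: "finite Q" and blk: "\<forall>K\<in>B. K \<subseteq> Q \<and> card K = k"
    using st unfolding steiner_system_def by auto
  have finB: "finite B" using blk finQ by (meson PowI finite_Pow_iff finite_subset subsetI)
  have finX: "finite X" and rows: "\<forall>r\<in>set M. length r = n \<and> distinct r \<and> set r \<subseteq> X"
    and cnt: "\<And>C K. C \<subseteq> {..<n} \<Longrightarrow> card C = k \<Longrightarrow> K \<subseteq> X \<Longrightarrow> card K = k \<Longrightarrow>
        length (filter (\<lambda>r. (\<lambda>i. r ! i) ` C = K) M) = lam"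
    using pa unfolding perpendicular_array_def by auto
  obtain \<phi> where phi: "bij_betw \<phi> Q {..<n}"
    using finite_same_card_bij[OF finQ, of "{..<n}"] Q by auto
  define \<sigma> where "\<sigma> r = (\<lambda>q. r ! \<phi> q)" for r :: "nat list"
  have sbij: "bij_betw (\<sigma> r) Q X" if r: "r \<in> set M" for r
  proof -
    have "set r = X" using rows r X finX
      by (metis card_subset_eq distinct_card)
    then have "bij_betw ((!) r) {..<n} X" using rows r by (metis bij_betw_nth)
    then show ?thesis using bij_betw_trans[OF phi] unfolding \<sigma>_def comp_def by blast
  qed
  define F where "F = image_mset (\<lambda>r. (`) (\<sigma> r) ` B) (mset M)"
  have ls: "large_set t k (lam * card B) X F"
    unfolding large_set_def
  proof (intro conjI allI impI)
    show "finite X" by fact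
    show "\<forall>B'\<in>#F. steiner_system t k X B'"
      unfolding F_def using steiner_image[OF sbij st] by auto
  next
    fix K assume K: "K \<subseteq> X \<and> card K = k"
    have "size (filter_mset (\<lambda>B'. K \<in> B') F) = length (filter (\<lambda>r. K \<in> (`) (\<sigma> r) ` B) M)"
      unfolding F_def by (simp add: filter_mset_image_mset flip: mset_filter)
    also have "\<dots> = (\<Sum>b\<in>B. length (filter (\<lambda>r. \<sigma> r ` b = K) M))"
    proof (rule length_filter_sum[OF finB])
      show "\<forall>r\<in>set M. (K \<in> (`) (\<sigma> r) ` B) = (\<exists>b\<in>B. \<sigma> r ` b = K)" by auto
      show "\<forall>r\<in>set M. \<forall>b1\<in>B. \<forall>b2\<in>B. \<sigma> r ` b1 = K \<and> \<sigma> r ` b2 = K \<longrightarrow> b1 = b2"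
      proof (intro ballI impI)
        fix r b1 b2 assume r: "r \<in> set M" and b: "b1 \<in> B" "b2 \<in> B" and e: "\<sigma> r ` b1 = K \<and> \<sigma> r ` b2 = K"
        have "inj_on (\<sigma> r) Q" using sbij[OF r] by (simp add: bij_betw_def)
        then show "b1 = b2" using b e blk by (metis inj_on_image_eq_iff)
      qed
    qed
    also have "\<dots> = (\<Sum>b\<in>B. lam)"
    proof (rule sum.cong[OF refl])
      fix b assume b: "b \<in> B"
      have "\<sigma> r ` b = (\<lambda>i. r ! i) ` (\<phi> ` b)" for r unfolding \<sigma>_def by auto
      moreover have "\<phi> ` b \<subseteq> {..<n}" using b blk phi by (auto simp: bij_betw_def)
      moreover have "card (\<phi> ` b) = k" using b blk phi
        by (metis bij_betw_def card_image inj_on_subset)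
      ultimately show "length (filter (\<lambda>r. \<sigma> r ` b = K) M) = lam"
        using cnt K by simp
    qed
    also have "\<dots> = lam * card B" by simp
    finally show "size (filter_mset (\<lambda>B'. K \<in> B') F) = lam * card B" .
  qed
  have cB: "card B * (k choose t) = n choose t" using steiner_card[OF st] Q by simp
  have pos: "0 < k choose t" using assms(2) by simp
  have "lam * (n choose t) div (k choose t) = lam * card B"
    using pos by (simp flip: cB)
  then show ?thesis using ls X by metis
qed

end
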